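(* Let $P$ be a special product rule and $X$ a set. Every function $D:X\to\mathbb Q_0[X]$ extends uniquely to a $\mathbb Q$-linear map $\tilde D:\mathbb Q_0[X]\to\mathbb Q_0[X]$ with $\tilde D(x)=D(x)$ for $x\in X$ and $\tilde D(\alpha\beta)=P(\alpha,\tilde D\alpha,\beta,\tilde D\beta)$ for all $\alpha,\beta\in\mathbb Q_0[X]$ (where $P$ is evaluated as a polynomial).
   Context: $\mathbb Q_0[X]$ denotes the set of commutative polynomials over $\mathbb Q$ in variables $X$ with zero constant term (a non-unital commutative $\mathbb Q$-algebra). Terms over $X$ are generated by $u,v::=x\mid 0\mid c\cdot u\mid u+v\mid u*v$ ($c\in\mathbb Q$). A product rule is a term $P$ over $\{x,\dot x,y,\dot y\}$; $P(s_1,\dots,s_4)$ denotes substitution. $u\approx v$ iff $u,v$ denote the same polynomial in $\mathbb Q[X]$ (constructors read as polynomial operations). $P$ is special if $P(x+y,\dot x+\dot y,z,\dot z)\approx P(x,\dot x,z,\dot z)+P(y,\dot y,z,\dot z)$, $P(x,\dot x,y*z,P(y,\dot y,z,\dot z))\approx P(x*y,P(x,\dot x,y,\dot y),z,\dot z)$, and $P(x,\dot x,y,\dot y)\approx P(y,\dot y,x,\dot x)$. *)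

theory Defs
  imports Complex_Main "HOL-Library.Poly_Mapping" "HOL-Library.FuncSet"
begin

text \<open>Commutative polynomials over the rationals in variables of type 'v:
  maps from monomials (exponent vectors, finitely supported) to coefficients.\<close>
type_synonym 'v mpoly = "('v \<Rightarrow>\<^sub>0 nat) \<Rightarrow>\<^sub>0 rat"

definition pvar :: "'v \<Rightarrow> 'v mpoly" where
  "pvar x = Poly_Mapping.single (Poly_Mapping.single x 1) 1"

definition psmult :: "rat \<Rightarrow> 'v mpoly \<Rightarrow> 'v mpoly" where
  "psmult c p = Poly_Mapping.map (\<lambda>a. c * a) p"

definition Q0 :: "'v set \<Rightarrow> 'v mpoly set" where
  "Q0 X = {p :: 'v mpoly. Poly_Mapping.lookup p 0 = 0 \<and> (\<forall>m \<in> Poly_Mapping.keys p. Poly_Mapping.keys m \<subseteq> X)}"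

datatype 'a trm = TVar 'a | TZero | TScal rat "'a trm" | TAdd "'a trm" "'a trm" | TMul "'a trm" "'a trm"

fun teval :: "('a \<Rightarrow> 'v mpoly) \<Rightarrow> 'a trm \<Rightarrow> 'v mpoly" where
  "teval \<rho> (TVar x) = \<rho> x"
| "teval \<rho> TZero = 0"
| "teval \<rho> (TScal c u) = psmult c (teval \<rho> u)"
| "teval \<rho> (TAdd u v) = teval \<rho> u + teval \<rho> v"
| "teval \<rho> (TMul u v) = teval \<rho> u * teval \<rho> v"

fun tsubst :: "('a \<Rightarrow> 'b trm) \<Rightarrow> 'a trm \<Rightarrow> 'b trm" where
  "tsubst \<sigma> (TVar x) = \<sigma> x"
| "tsubst \<sigma> TZero = TZero"
| "tsubst \<sigma> (TScal c u) = TScal c (tsubst \<sigma> u)"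
| "tsubst \<sigma> (TAdd u v) = TAdd (tsubst \<sigma> u) (tsubst \<sigma> v)"
| "tsubst \<sigma> (TMul u v) = TMul (tsubst \<sigma> u) (tsubst \<sigma> v)"

definition tequiv :: "'a trm \<Rightarrow> 'a trm \<Rightarrow> bool" where
  "tequiv u v \<longleftrightarrow> teval pvar u = teval pvar v"

text \<open>Variables of a product rule: x, x', y, y'.\<close>
datatype prvar = PX | PDX | PY | PDY

type_synonym prule = "prvar trm"

definition papp :: "prule \<Rightarrow> 'b trm \<Rightarrow> 'b trm \<Rightarrow> 'b trm \<Rightarrow> 'b trm \<Rightarrow> 'b trm" where
  "papp P s1 s2 s3 s4 = tsubst (\<lambda>v. case v of PX \<Rightarrow> s1 | PDX \<Rightarrow> s2 | PY \<Rightarrow> s3 | PDY \<Rightarrow> s4) P"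

datatype svar = SX | SDX | SY | SDY | SZ | SDZ

definition special :: "prule \<Rightarrow> bool" where
  "special P \<longleftrightarrow>
     tequiv (papp P (TAdd (TVar SX) (TVar SY)) (TAdd (TVar SDX) (TVar SDY)) (TVar SZ) (TVar SDZ))
            (TAdd (papp P (TVar SX) (TVar SDX) (TVar SZ) (TVar SDZ))
                  (papp P (TVar SY) (TVar SDY) (TVar SZ) (TVar SDZ)))
   \<and> tequiv (papp P (TVar SX) (TVar SDX) (TMul (TVar SY) (TVar SZ))
                  (papp P (TVar SY) (TVar SDY) (TVar SZ) (TVar SDZ)))
            (papp P (TMul (TVar SX) (TVar SY)) (papp P (TVar SX) (TVar SDX) (TVar SY) (TVar SDY))
                  (TVar SZ) (TVar SDZ))
   \<and> tequiv (papp P (TVar SX) (TVar SDX) (TVar SY) (TVar SDY))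
            (papp P (TVar SY) (TVar SDY) (TVar SX) (TVar SDX))"

definition peval :: "prule \<Rightarrow> 'v mpoly \<Rightarrow> 'v mpoly \<Rightarrow> 'v mpoly \<Rightarrow> 'v mpoly \<Rightarrow> 'v mpoly" where
  "peval P a b c d = teval (\<lambda>v. case v of PX \<Rightarrow> a | PDX \<Rightarrow> b | PY \<Rightarrow> c | PDY \<Rightarrow> d) P"

end

theory Submission
  imports Defs "HOL-Library.Multiset"
begin


abbreviation "lk \<equiv> Poly_Mapping.lookup"
abbreviation "ks \<equiv> Poly_Mapping.keys"
abbreviation "sg \<equiv> Poly_Mapping.single"

lemma psm: "psmult c p = sg 0 c * p"
  unfolding psmult_def by (simp add: mult_map_scale_conv_mult[symmetric])

lemma lookup_C_mult: "lk (sg 0 c * p) k = c * lk p k"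
  by (simp add: mult_map_scale_conv_mult[symmetric] map.rep_eq when_def)

lemma C_mult: "sg 0 (a * b) = sg 0 a * (sg 0 b :: ('u \<Rightarrow>\<^sub>0 nat) \<Rightarrow>\<^sub>0 rat)"
  by (simp add: mult_single)

lemma keys_C_mult: "ks (sg 0 c * p) \<subseteq> ks p"
  by (auto simp: in_keys_iff lookup_C_mult)

lemma expand: "p = (\<Sum>m\<in>ks p. sg m (lk p m))"
proof (rule poly_mapping_eqI)
  fix k show "lk p k = lk (\<Sum>m\<in>ks p. sg m (lk p m)) k"
    by (cases "k \<in> ks p") (auto simp: lookup_sum lookup_single when_def in_keys_iff)
qed

lemma expand1: "(p::'u mpoly) = (\<Sum>m\<in>ks p. sg 0 (lk p m) * sg m 1)"
  by (subst expand) (simp add: mult_single)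

definition lin :: "(('u \<Rightarrow>\<^sub>0 nat) \<Rightarrow> 'w mpoly) \<Rightarrow> 'u mpoly \<Rightarrow> 'w mpoly" where
  "lin f p = (\<Sum>m\<in>ks p. sg 0 (lk p m) * f m)"

lemma lin_superset: "finite S \<Longrightarrow> ks p \<subseteq> S \<Longrightarrow> lin f p = (\<Sum>m\<in>S. sg 0 (lk p m) * f m)"
  unfolding lin_def by (rule sum.mono_neutral_left) (auto simp: in_keys_iff)

lemma lin_add: "lin f (p + q) = lin f p + lin f q"
proof -
  let ?S = "ks p \<union> ks q"
  have "lin f (p+q) = (\<Sum>m\<in>?S. sg 0 (lk (p+q) m) * f m)"
    using keys_add[of p q] by (intro lin_superset) auto
  also have "\<dots> = (\<Sum>m\<in>?S. sg 0 (lk p m) * f m) + (\<Sum>m\<in>?S. sg 0 (lk q m) * f m)"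
    by (simp add: lookup_add single_add distrib_right sum.distrib)
  also have "\<dots> = lin f p + lin f q"
    by (simp add: lin_superset[of ?S p f] lin_superset[of ?S q f])
  finally show ?thesis .
qed

lemma lin_zero: "lin f 0 = 0" by (simp add: lin_def)

lemma lin_sum: "finite I \<Longrightarrow> lin f (\<Sum>i\<in>I. p i) = (\<Sum>i\<in>I. lin f (p i))"
  by (induction I rule: finite_induct) (auto simp: lin_zero lin_add)

lemma lin_single: "lin f (sg m a) = sg 0 a * f m"
  by (cases "a = 0") (auto simp: lin_def)

lemma lin_C: "lin f (sg 0 c * p) = sg 0 c * lin f p"
proof -
  have "lin f (sg 0 c * p) = (\<Sum>m\<in>ks p. sg 0 (lk (sg 0 c * p) m) * f m)"
    by (rule lin_superset) (auto intro: keys_C_mult[THEN subsetD])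
  also have "\<dots> = sg 0 c * lin f p"
    by (simp add: lookup_C_mult lin_def sum_distrib_left C_mult mult.assoc)
  finally show ?thesis .
qed

lemma lin_prod: "lin f (p * q) = (\<Sum>m\<in>ks p. \<Sum>n\<in>ks q. sg 0 (lk p m * lk q n) * f (m + n))"
proof -
  have "p * q = (\<Sum>m\<in>ks p. sg m (lk p m)) * (\<Sum>n\<in>ks q. sg n (lk q n))"
    by (subst expand, subst (2) expand) (rule refl)
  also have "\<dots> = (\<Sum>m\<in>ks p. \<Sum>n\<in>ks q. sg (m+n) (lk p m * lk q n))"
    by (simp add: sum_product mult_single)
  finally show ?thesis by (simp add: lin_sum lin_single)
qed

definition mon :: "('u \<Rightarrow> 'w mpoly) \<Rightarrow> ('u \<Rightarrow>\<^sub>0 nat) \<Rightarrow> 'w mpoly" where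
  "mon \<sigma> m = (\<Prod>s\<in>ks m. \<sigma> s ^ lk m s)"

lemma mon_superset: "finite S \<Longrightarrow> ks m \<subseteq> S \<Longrightarrow> mon \<sigma> m = (\<Prod>s\<in>S. \<sigma> s ^ lk m s)"
  unfolding mon_def by (rule prod.mono_neutral_left) (auto simp: in_keys_iff)

lemma mon_add: "mon \<sigma> (m + n) = mon \<sigma> m * mon \<sigma> n"
proof -
  let ?S = "ks m \<union> ks n"
  have "mon \<sigma> (m+n) = (\<Prod>s\<in>?S. \<sigma> s ^ lk (m+n) s)"
    using keys_add[of m n] by (intro mon_superset) auto
  also have "\<dots> = (\<Prod>s\<in>?S. \<sigma> s ^ lk m s) * (\<Prod>s\<in>?S. \<sigma> s ^ lk n s)"
    by (simp add: lookup_add power_add prod.distrib)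
  also have "\<dots> = mon \<sigma> m * mon \<sigma> n"
    by (simp add: mon_superset[of ?S m] mon_superset[of ?S n])
  finally show ?thesis .
qed

definition ev :: "('u \<Rightarrow> 'w mpoly) \<Rightarrow> 'u mpoly \<Rightarrow> 'w mpoly" where
  "ev \<sigma> = lin (mon \<sigma>)"

lemma ev_mult: "ev \<sigma> (p * q) = ev \<sigma> p * ev \<sigma> q"
  unfolding ev_def lin_prod mon_add
  by (simp add: lin_def sum_product C_mult mult_ac)

lemma teval_ev: "teval \<rho> u = ev \<rho> (teval pvar u)"
proof (induction u)
  case (TVar x)
  then show ?case by (simp add: ev_def pvar_def lin_single mon_def)
next
  case TZero
  then show ?case by (simp add: ev_def lin_zero)
next
  case (TScal c u)
  then show ?case by (simp add: ev_def psm lin_C)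
next
  case (TAdd u v)
  then show ?case by (simp add: ev_def lin_add)
next
  case (TMul u v)
  then show ?case by (simp add: ev_mult)
qed

lemma tequiv_eval: "tequiv u v \<Longrightarrow> teval \<rho> u = teval \<rho> v"
  unfolding tequiv_def by (metis teval_ev)

lemma teval_tsubst: "teval \<rho> (tsubst \<sigma> u) = teval (\<lambda>x. teval \<rho> (\<sigma> x)) u"
  by (induction u) auto

lemma teval_papp: "teval \<rho> (papp P s1 s2 s3 s4) = peval P (teval \<rho> s1) (teval \<rho> s2) (teval \<rho> s3) (teval \<rho> s4)"
  unfolding papp_def peval_def teval_tsubst
  by (rule arg_cong[where f="\<lambda>r. teval r P"]) (auto simp: fun_eq_iff split: prvar.split)



definition srho :: "'w \<Rightarrow> 'w \<Rightarrow> 'w \<Rightarrow> 'w \<Rightarrow> 'w \<Rightarrow> 'w \<Rightarrow> svar \<Rightarrow> 'w" where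
  "srho a a' b b' c c' v = (case v of SX \<Rightarrow> a | SDX \<Rightarrow> a' | SY \<Rightarrow> b | SDY \<Rightarrow> b' | SZ \<Rightarrow> c | SDZ \<Rightarrow> c')"

lemma sp_add:
  assumes "special P"
  shows "peval P (a + b) (a' + b') c c' = peval P a a' c c' + peval P b b' c c'"
proof -
  from assms have "tequiv (papp P (TAdd (TVar SX) (TVar SY)) (TAdd (TVar SDX) (TVar SDY)) (TVar SZ) (TVar SDZ))
            (TAdd (papp P (TVar SX) (TVar SDX) (TVar SZ) (TVar SDZ))
                  (papp P (TVar SY) (TVar SDY) (TVar SZ) (TVar SDZ)))" by (simp add: special_def)
  from tequiv_eval[OF this, of "srho a a' b b' c c'"] show ?thesis
    by (simp add: teval_papp srho_def)
qed

lemma sp_assoc: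
  assumes "special P"
  shows "peval P a a' (b * c) (peval P b b' c c') = peval P (a * b) (peval P a a' b b') c c'"
proof -
  from assms have "tequiv (papp P (TVar SX) (TVar SDX) (TMul (TVar SY) (TVar SZ))
                  (papp P (TVar SY) (TVar SDY) (TVar SZ) (TVar SDZ)))
            (papp P (TMul (TVar SX) (TVar SY)) (papp P (TVar SX) (TVar SDX) (TVar SY) (TVar SDY))
                  (TVar SZ) (TVar SDZ))" by (simp add: special_def)
  from tequiv_eval[OF this, of "srho a a' b b' c c'"] show ?thesis
    by (simp add: teval_papp srho_def)
qed

lemma sp_comm:
  assumes "special P"
  shows "peval P a a' b b' = peval P b b' a a'"
proof -
  from assms have "tequiv (papp P (TVar SX) (TVar SDX) (TVar SY) (TVar SDY))
            (papp P (TVar SY) (TVar SDY) (TVar SX) (TVar SDX))" by (simp add: special_def)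
  from tequiv_eval[OF this, of "srho a a' b b' b b'"] show ?thesis
    by (simp add: teval_papp srho_def)
qed

lemma sp_zero: "special P \<Longrightarrow> peval P 0 0 c c' = 0"
  using sp_add[of P 0 0 0 0 c c'] by simp

lemma sp_neg: "special P \<Longrightarrow> peval P (- a) (- a') c c' = - peval P a a' c c'"
  using sp_add[of P a "-a" a' "-a'" c c'] sp_zero[of P c c'] by (simp add: eq_neg_iff_add_eq_0 add.commute)

lemma sp_nat: "special P \<Longrightarrow> peval P (of_nat n * a) (of_nat n * a') c c' = of_nat n * peval P a a' c c'"
proof (induction n)
  case 0 then show ?case by (simp add: sp_zero)
next
  case (Suc n) then show ?case by (simp add: distrib_right sp_add)
qed

lemma sp_int: "special P \<Longrightarrow> peval P (of_int k * a) (of_int k * a') c c' = of_int k * peval P a a' c c'"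
proof (cases "k \<ge> 0")
  case True
  then obtain n where "k = int n" using that[of "nat k"] by simp
  then show "special P \<Longrightarrow> ?thesis" using sp_nat[of P n a a' c c'] by simp
next
  case False
  then obtain n where "k = - int n" using that[of "nat (- k)"] by simp
  then show "special P \<Longrightarrow> ?thesis" using sp_nat[of P n a a' c c'] sp_neg[of P "of_nat n * a" "of_nat n * a'" c c']
    by simp
qed

lemma sp_C:
  assumes sp: "special P"
  shows "peval P (sg 0 r * a) (sg 0 r * a') c c' = sg 0 r * peval P a a' c c'"
proof -
  obtain p q where rf: "r = Fract p q" and q: "q > 0"
    by (cases r rule: Rat_cases) auto
  have r: "r = of_int p / of_int q" using rf by (simp add: Fract_of_int_quotient)
  let ?X = "peval P (sg 0 r * a) (sg 0 r * a') c c'"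
  let ?Y = "peval P a a' c c'"
  have qr: "of_int q * r = of_int p" using r q by simp
  have e1: "of_int q * (sg 0 r * a) = (of_int p :: _ mpoly) * a"
    by (simp add: mult.assoc[symmetric] C_mult[symmetric] qr flip: single_of_int)
  have e2: "of_int q * (sg 0 r * a') = (of_int p :: _ mpoly) * a'"
    by (simp add: mult.assoc[symmetric] C_mult[symmetric] qr flip: single_of_int)
  have "of_int q * ?X = peval P (of_int q * (sg 0 r * a)) (of_int q * (sg 0 r * a')) c c'"
    by (rule sp_int[OF sp, symmetric])
  also have "\<dots> = peval P (of_int p * a) (of_int p * a') c c'"
    by (simp only: e1 e2)
  also have "\<dots> = of_int p * ?Y"
    by (rule sp_int[OF sp])
  finally have eq: "of_int q * ?X = of_int p * ?Y" .
  have inv: "sg 0 (1 / of_int q) * (of_int q :: _ mpoly) = 1"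
    using q by (simp add: C_mult[symmetric] flip: single_of_int)
  have e3: "sg 0 (1 / of_int q) * of_int p = sg 0 r"
    using r by (simp flip: single_of_int add: mult_single)
  have "?X = (sg 0 (1 / of_int q) * of_int q) * ?X"
    by (simp only: inv mult_1_left)
  also have "\<dots> = sg 0 (1 / of_int q) * (of_int q * ?X)" by (rule mult.assoc)
  also have "\<dots> = sg 0 (1 / of_int q) * (of_int p * ?Y)" by (simp only: eq)
  also have "\<dots> = (sg 0 (1 / of_int q) * of_int p) * ?Y" by (rule mult.assoc[symmetric])
  also have "\<dots> = sg 0 r * ?Y" by (simp only: e3)
  finally show ?thesis .
qed

lemma sp_sum1:
  assumes sp: "special P" and "finite I"
  shows "peval P (\<Sum>i\<in>I. sg 0 (k i) * a i) (\<Sum>i\<in>I. sg 0 (k i) * a' i) c c' = (\<Sum>i\<in>I. sg 0 (k i) * peval P (a i) (a' i) c c')"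
  using assms(2)
proof (induction I rule: finite_induct)
  case empty
  then show ?case by (simp only: sum.empty sp_zero[OF sp])
next
  case (insert x F)
  then show ?case by (simp only: sum.insert[OF insert.hyps(1,2)] sp_add[OF sp] sp_C[OF sp])
qed

lemma sp_sum2:
  assumes sp: "special P" and "finite I"
  shows "peval P c c' (\<Sum>i\<in>I. sg 0 (k i) * a i) (\<Sum>i\<in>I. sg 0 (k i) * a' i) = (\<Sum>i\<in>I. sg 0 (k i) * peval P c c' (a i) (a' i))"
proof -
  have "peval P c c' (\<Sum>i\<in>I. sg 0 (k i) * a i) (\<Sum>i\<in>I. sg 0 (k i) * a' i)
     = peval P (\<Sum>i\<in>I. sg 0 (k i) * a i) (\<Sum>i\<in>I. sg 0 (k i) * a' i) c c'"
    by (rule sp_comm[OF sp])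
  also have "\<dots> = (\<Sum>i\<in>I. sg 0 (k i) * peval P (a i) (a' i) c c')"
    by (rule sp_sum1[OF assms])
  also have "\<dots> = (\<Sum>i\<in>I. sg 0 (k i) * peval P c c' (a i) (a' i))"
    by (rule sum.cong[OF refl]) (rule arg_cong[OF sp_comm[OF sp]])
  finally show ?thesis .
qed



lemma Q0_iff: "p \<in> Q0 X \<longleftrightarrow> lk p 0 = 0 \<and> (\<forall>m\<in>ks p. ks m \<subseteq> X)"
  by (simp add: Q0_def)

lemma Q0_keys: "p \<in> Q0 X \<Longrightarrow> m \<in> ks p \<Longrightarrow> m \<noteq> 0 \<and> ks m \<subseteq> X"
  by (auto simp: Q0_def in_keys_iff)

lemma Q0_zero: "0 \<in> Q0 X" by (simp add: Q0_def)

lemma Q0_add: "p \<in> Q0 X \<Longrightarrow> q \<in> Q0 X \<Longrightarrow> p + q \<in> Q0 X"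
  using keys_add[of p q] by (auto simp: Q0_def lookup_add)

lemma Q0_sum: "finite I \<Longrightarrow> (\<And>i. i \<in> I \<Longrightarrow> p i \<in> Q0 X) \<Longrightarrow> (\<Sum>i\<in>I. p i) \<in> Q0 X"
  by (induction I rule: finite_induct) (auto simp: Q0_zero Q0_add)

lemma Q0_C: "q \<in> Q0 X \<Longrightarrow> sg 0 c * q \<in> Q0 X"
  using keys_C_mult[of c q] by (auto simp: Q0_def lookup_C_mult)

lemma nat_pm_add_eq_0: "(a::'u \<Rightarrow>\<^sub>0 nat) + b = 0 \<Longrightarrow> a = 0"
  by (metis add_is_0 lookup_add lookup_zero poly_mapping_eqI)

lemma Q0_mult: "p \<in> Q0 X \<Longrightarrow> q \<in> Q0 X \<Longrightarrow> p * q \<in> Q0 X"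
proof -
  assume p: "p \<in> Q0 X" and q: "q \<in> Q0 X"
  have k: "ks (p * q) \<subseteq> {a + b |a b. a \<in> ks p \<and> b \<in> ks q}" by (rule keys_mult)
  have "0 \<notin> ks (p * q)"
  proof
    assume "0 \<in> ks (p * q)"
    then obtain a b where "a \<in> ks p" "0 = a + b" using k by blast
    then show False using Q0_keys[OF p] nat_pm_add_eq_0[of a b] by auto
  qed
  moreover have "ks m \<subseteq> X" if mk: "m \<in> ks (p * q)" for m
  proof -
    obtain a b where "a \<in> ks p" "b \<in> ks q" "m = a + b" using subsetD[OF k mk] by blast
    then show ?thesis using Q0_keys[OF p] Q0_keys[OF q] keys_add[of a b] by blast
  qed
  ultimately show ?thesis by (auto simp: Q0_def in_keys_iff)
qed

lemma Q0_single: "m \<noteq> 0 \<Longrightarrow> ks m \<subseteq> X \<Longrightarrow> sg m c \<in> Q0 X"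
  by (auto simp: Q0_def lookup_single)

lemma Q0_pvar: "x \<in> X \<Longrightarrow> pvar x \<in> Q0 X"
  unfolding pvar_def by (rule Q0_single) (auto simp: poly_mapping_eq_iff fun_eq_iff lookup_single when_def)

lemma Q0_teval: "(\<And>v. \<rho> v \<in> Q0 X) \<Longrightarrow> teval \<rho> u \<in> Q0 X"
  by (induction u) (auto simp: Q0_zero Q0_add Q0_mult Q0_C psm)

lemma Q0_peval: "a \<in> Q0 X \<Longrightarrow> a' \<in> Q0 X \<Longrightarrow> b \<in> Q0 X \<Longrightarrow> b' \<in> Q0 X \<Longrightarrow> peval P a a' b b' \<in> Q0 X"
  unfolding peval_def by (rule Q0_teval) (auto split: prvar.split)

definition mset_of :: "('u \<Rightarrow>\<^sub>0 nat) \<Rightarrow> 'u multiset" where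
  "mset_of m = Abs_multiset (lk m)"

lemma count_mset_of: "count (mset_of m) x = lk m x"
proof -
  have "{x. 0 < lk m x} = ks m" by (auto simp: in_keys_iff)
  then have "finite {x. 0 < lk m x}" by simp
  then show ?thesis by (simp add: mset_of_def count_Abs_multiset)
qed

definition monof :: "'u multiset \<Rightarrow> ('u \<Rightarrow>\<^sub>0 nat)" where
  "monof M = sum_mset (image_mset (\<lambda>x. sg x 1) M)"

lemma lookup_monof: "lk (monof M) y = count M y"
  by (induction M) (auto simp: monof_def lookup_add lookup_single)

lemma monof_mset_of: "monof (mset_of m) = m"
  by (rule poly_mapping_eqI) (simp add: lookup_monof count_mset_of)

lemma monof_add_mset: "monof (add_mset x M) = sg x 1 + monof M"
  by (simp add: monof_def)

lemma mset_of_add: "mset_of (m + n) = mset_of m + mset_of n"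
  by (rule multiset_eqI) (simp add: count_mset_of lookup_add)

lemma mset_of_single: "mset_of (sg x 1) = {#x#}"
  by (rule multiset_eqI) (simp add: count_mset_of lookup_single)

lemma mset_of_empty: "m \<noteq> 0 \<Longrightarrow> mset_of m \<noteq> {#}"
  by (metis count_empty count_mset_of lookup_zero poly_mapping_eqI)

lemma set_mset_of: "set_mset (mset_of m) = ks m"
  by (auto simp: count_mset_of in_keys_iff simp flip: count_greater_zero_iff)

fun opm :: "prule \<Rightarrow> ('v mpoly \<times> 'v mpoly) option \<Rightarrow> ('v mpoly \<times> 'v mpoly) option \<Rightarrow> ('v mpoly \<times> 'v mpoly) option" where
  "opm P None y = y"
| "opm P (Some x) None = Some x"
| "opm P (Some (a, a')) (Some (b, b')) = Some (a * b, peval P a a' b b')"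

lemma opm_comm: "special P \<Longrightarrow> opm P x y = opm P y x"
  by (cases x; cases y) (auto simp: sp_comm[of P] mult.commute)

lemma opm_assoc: "special P \<Longrightarrow> opm P (opm P x y) z = opm P x (opm P y z)"
  by (cases x; cases y; cases z) (auto simp: sp_assoc[of P] mult.assoc)

definition Fm :: "prule \<Rightarrow> ('v mpoly \<times> 'v mpoly) option multiset \<Rightarrow> ('v mpoly \<times> 'v mpoly) option" where
  "Fm P M = fold_mset (opm P) None M"

lemma Fm_props:
  assumes "special P"
  shows "Fm P (M + N) = opm P (Fm P M) (Fm P N)" "Fm P {#x#} = x" "Fm P {#} = None"
proof -
  interpret M: comm_monoid_mset "opm P" None
  proof
    show "opm P (opm P a b) c = opm P a (opm P b c)" for a b c by (rule opm_assoc[OF assms])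
    show "opm P a b = opm P b a" for a b by (rule opm_comm[OF assms])
    show "opm P a None = a" for a by (cases a) auto
  qed
  show "Fm P (M + N) = opm P (Fm P M) (Fm P N)" "Fm P {#x#} = x" "Fm P {#} = None"
    using M.union[of M N] M.singleton[of x] M.empty by (simp_all add: M.eq_fold Fm_def)
qed



definition Dm :: "prule \<Rightarrow> ('v \<Rightarrow> 'v mpoly) \<Rightarrow> ('v \<Rightarrow>\<^sub>0 nat) \<Rightarrow> 'v mpoly" where
  "Dm P D m = snd (the (Fm P (image_mset (\<lambda>x. Some (pvar x, D x)) (mset_of m))))"

lemma keys_monof: "ks (monof M) = set_mset M"
  by (auto simp: in_keys_iff lookup_monof simp flip: count_greater_zero_iff)

lemma Q0_monof: "M \<noteq> {#} \<Longrightarrow> set_mset M \<subseteq> X \<Longrightarrow> sg (monof M) c \<in> Q0 X"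
proof -
  assume "M \<noteq> {#}" "set_mset M \<subseteq> X"
  moreover have "monof M \<noteq> 0" using keys_monof[of M] \<open>M \<noteq> {#}\<close> by auto
  ultimately show ?thesis by (intro Q0_single) (auto simp: keys_monof)
qed

lemma pvar_mult: "pvar x * sg m 1 = sg (sg x 1 + m) 1"
  by (simp add: pvar_def mult_single)

lemma Fm_addm:
  assumes "special P"
  shows "Fm P (image_mset g (add_mset x M)) = opm P (g x) (Fm P (image_mset g M))"
proof -
  have "image_mset g (add_mset x M) = {#g x#} + image_mset g M" by simp
  then show ?thesis by (simp only: Fm_props[OF assms])
qed

lemma Fm_addm2:
  assumes "special P"
  shows "Fm P (add_mset y N) = opm P y (Fm P N)"
proof -
  have "add_mset y N = {#y#} + N" by simp
  then show ?thesis by (simp only: Fm_props[OF assms])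
qed

lemma Fm_mon:
  assumes sp: "special P" and D: "\<forall>x\<in>X. D x \<in> Q0 X"
  shows "M \<noteq> {#} \<Longrightarrow> set_mset M \<subseteq> X \<Longrightarrow>
    \<exists>d. Fm P (image_mset (\<lambda>x. Some (pvar x, D x)) M) = Some (sg (monof M) 1, d) \<and> d \<in> Q0 X"
proof (induction M)
  case empty
  then show ?case by simp
next
  case (add x M)
  show ?case
  proof (cases "M = {#}")
    case True
    then show ?thesis using add.prems D
      by (simp add: monof_def pvar_def Fm_props(2)[OF sp])
  next
    case False
    with add obtain d where d: "Fm P (image_mset (\<lambda>x. Some (pvar x, D x)) M) = Some (sg (monof M) 1, d)" "d \<in> Q0 X"
      by auto
    have "sg (monof M) 1 \<in> Q0 X" using False add.prems by (intro Q0_monof) auto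
    moreover have "pvar x \<in> Q0 X" "D x \<in> Q0 X" using add.prems D by (auto intro: Q0_pvar)
    ultimately show ?thesis
      using d by (simp add: Fm_addm2[OF sp] pvar_mult monof_add_mset Q0_peval)
  qed
qed

lemma Fm_uniq:
  assumes sp: "special P"
    and var: "\<forall>x\<in>X. Dt (pvar x) = D x"
    and mul: "\<forall>a\<in>Q0 X. \<forall>b\<in>Q0 X. Dt (a * b) = peval P a (Dt a) b (Dt b)"
  shows "M \<noteq> {#} \<Longrightarrow> set_mset M \<subseteq> X \<Longrightarrow>
    Fm P (image_mset (\<lambda>x. Some (pvar x, D x)) M) = Some (sg (monof M) 1, Dt (sg (monof M) 1))"
proof (induction M)
  case empty
  then show ?case by simp
next
  case (add x M)
  show ?case
  proof (cases "M = {#}")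
    case True
    then show ?thesis using add.prems var
      by (simp add: monof_def pvar_def Fm_props(2)[OF sp])
  next
    case False
    with add have d: "Fm P (image_mset (\<lambda>x. Some (pvar x, D x)) M) = Some (sg (monof M) 1, Dt (sg (monof M) 1))"
      by auto
    have q1: "sg (monof M) 1 \<in> Q0 X" using False add.prems by (intro Q0_monof) auto
    have q2: "pvar x \<in> Q0 X" using add.prems by (auto intro: Q0_pvar)
    have e1: "Dt (pvar x * sg (monof M) 1) = peval P (pvar x) (Dt (pvar x)) (sg (monof M) 1) (Dt (sg (monof M) 1))"
      by (rule mul[rule_format, OF q2 q1])
    have e2: "Dt (pvar x) = D x" using var add.prems by simp
    have "Fm P (image_mset (\<lambda>x. Some (pvar x, D x)) (add_mset x M))
        = opm P (Some (pvar x, D x)) (Fm P (image_mset (\<lambda>x. Some (pvar x, D x)) M))"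
      by (simp only: image_mset_add_mset Fm_addm2[OF sp])
    also have "\<dots> = Some (pvar x * sg (monof M) 1, peval P (pvar x) (D x) (sg (monof M) 1) (Dt (sg (monof M) 1)))"
      by (simp only: d opm.simps)
    also have "\<dots> = Some (sg (monof (add_mset x M)) 1, Dt (sg (monof (add_mset x M)) 1))"
      by (simp only: monof_add_mset pvar_mult[symmetric] e1 e2)
    finally show ?thesis .
  qed
qed

lemma Dm_Fm:
  assumes sp: "special P" and D: "\<forall>x\<in>X. D x \<in> Q0 X" and m: "m \<noteq> 0" "ks m \<subseteq> X"
  shows "Fm P (image_mset (\<lambda>x. Some (pvar x, D x)) (mset_of m)) = Some (sg m 1, Dm P D m) \<and> Dm P D m \<in> Q0 X"
  using Fm_mon[OF sp D, of "mset_of m"] m mset_of_empty[of m]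
  by (auto simp: set_mset_of monof_mset_of Dm_def)

lemma Dm_add:
  assumes sp: "special P" and D: "\<forall>x\<in>X. D x \<in> Q0 X" and m: "m \<noteq> 0" "ks m \<subseteq> X" and n: "n \<noteq> 0" "ks n \<subseteq> X"
  shows "Dm P D (m + n) = peval P (sg m 1) (Dm P D m) (sg n 1) (Dm P D n)"
proof -
  have "Fm P (image_mset (\<lambda>x. Some (pvar x, D x)) (mset_of (m + n)))
     = opm P (Fm P (image_mset (\<lambda>x. Some (pvar x, D x)) (mset_of m))) (Fm P (image_mset (\<lambda>x. Some (pvar x, D x)) (mset_of n)))"
    by (simp add: mset_of_add Fm_props(1)[OF sp])
  also have "\<dots> = Some (sg m 1 * sg n 1, peval P (sg m 1) (Dm P D m) (sg n 1) (Dm P D n))"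
    using Dm_Fm[OF sp D m] Dm_Fm[OF sp D n] by simp
  finally show ?thesis unfolding Dm_def[of P D "m + n"] by simp
qed

lemma Dm_var:
  assumes sp: "special P"
  shows "Dm P D (sg x 1) = D x"
proof -
  have "mset_of (sg x 1) = {#x#}" by (rule mset_of_single)
  then show ?thesis by (simp add: Dm_def Fm_props(2)[OF sp])
qed

lemma Dm_uniq:
  assumes sp: "special P"
    and var: "\<forall>x\<in>X. Dt (pvar x) = D x"
    and mul: "\<forall>a\<in>Q0 X. \<forall>b\<in>Q0 X. Dt (a * b) = peval P a (Dt a) b (Dt b)"
    and m: "m \<noteq> 0" "ks m \<subseteq> X"
  shows "Dt (sg m 1) = Dm P D m"
  using Fm_uniq[OF sp var mul, of "mset_of m"] m mset_of_empty[of m]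
  by (auto simp: set_mset_of monof_mset_of Dm_def)

lemma map_sum:
  assumes add: "\<forall>a\<in>Q0 X. \<forall>b\<in>Q0 X. f (a + b) = f a + f b"
    and sc: "\<forall>c. \<forall>a\<in>Q0 X. f (psmult c a) = psmult c (f a)"
    and I: "finite I" and a: "\<forall>i\<in>I. a i \<in> Q0 X"
  shows "f (\<Sum>i\<in>I. sg 0 (k i) * a i) = (\<Sum>i\<in>I. sg 0 (k i) * f (a i))"
  using I a
proof (induction I rule: finite_induct)
  case empty
  have "f (0 + 0) = f 0 + f 0" using add Q0_zero by blast
  then show ?case by simp
next
  case (insert x F)
  have s: "(\<Sum>i\<in>F. sg 0 (k i) * a i) \<in> Q0 X" using insert by (intro Q0_sum Q0_C) auto
  have ax: "a x \<in> Q0 X" using insert by auto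
  have ih: "f (\<Sum>i\<in>F. sg 0 (k i) * a i) = (\<Sum>i\<in>F. sg 0 (k i) * f (a i))"
    using insert.IH insert.prems by simp
  have sx: "f (sg 0 (k x) * a x) = sg 0 (k x) * f (a x)"
    using sc[rule_format, OF ax, of "k x"] by (simp only: psm)
  have "f (\<Sum>i\<in>insert x F. sg 0 (k i) * a i) = f (sg 0 (k x) * a x + (\<Sum>i\<in>F. sg 0 (k i) * a i))"
    by (simp only: sum.insert[OF insert(1,2)])
  also have "\<dots> = f (sg 0 (k x) * a x) + f (\<Sum>i\<in>F. sg 0 (k i) * a i)"
    by (rule add[rule_format, OF Q0_C[OF ax] s])
  also have "\<dots> = sg 0 (k x) * f (a x) + (\<Sum>i\<in>F. sg 0 (k i) * f (a i))"
    by (simp only: sx ih)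
  finally show ?case by (simp only: sum.insert[OF insert(1,2)])
qed



lemma lin_Q0:
  assumes sp: "special P" and D: "\<forall>x\<in>X. D x \<in> Q0 X" and p: "p \<in> Q0 X"
  shows "lin (Dm P D) p \<in> Q0 X"
  unfolding lin_def
proof (rule Q0_sum)
  fix m assume "m \<in> ks p"
  then have "m \<noteq> 0" "ks m \<subseteq> X" using Q0_keys[OF p] by auto
  then show "sg 0 (lk p m) * Dm P D m \<in> Q0 X" using Dm_Fm[OF sp D] by (intro Q0_C) auto
qed simp

theorem mainTheorem10:
  fixes P :: prule and X :: "'v set" and D :: "'v \<Rightarrow> 'v mpoly"
  assumes "special P"
    and "\<forall>x\<in>X. D x \<in> Q0 X"
  shows "\<exists>!Dt. Dt \<in> Q0 X \<rightarrow>\<^sub>E Q0 X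
          \<and> (\<forall>a\<in>Q0 X. \<forall>b\<in>Q0 X. Dt (a + b) = Dt a + Dt b)
          \<and> (\<forall>c. \<forall>a\<in>Q0 X. Dt (psmult c a) = psmult c (Dt a))
          \<and> (\<forall>x\<in>X. Dt (pvar x) = D x)
          \<and> (\<forall>a\<in>Q0 X. \<forall>b\<in>Q0 X. Dt (a * b) = peval P a (Dt a) b (Dt b))"
proof -
  note sp = assms(1) and D = assms(2)
  define L where "L = lin (Dm P D)"
  define Dt where "Dt = restrict L (Q0 X)"
  have LQ: "L p \<in> Q0 X" if "p \<in> Q0 X" for p
    unfolding L_def by (rule lin_Q0[OF sp D that])
  have P1: "Dt \<in> Q0 X \<rightarrow>\<^sub>E Q0 X" unfolding Dt_def using LQ by auto
  have P2: "\<forall>a\<in>Q0 X. \<forall>b\<in>Q0 X. Dt (a + b) = Dt a + Dt b"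
    by (auto simp: Dt_def L_def Q0_add lin_add)
  have P3: "\<forall>c. \<forall>a\<in>Q0 X. Dt (psmult c a) = psmult c (Dt a)"
    by (auto simp: Dt_def L_def psm Q0_C lin_C)
  have P4: "\<forall>x\<in>X. Dt (pvar x) = D x"
  proof
    fix x assume x: "x \<in> X"
    have "L (pvar x) = sg 0 1 * D x"
      by (simp only: L_def pvar_def lin_single Dm_var[OF sp])
    then have "L (pvar x) = D x" by simp
    then show "Dt (pvar x) = D x" using Q0_pvar[OF x] by (simp add: Dt_def)
  qed
  have P5: "\<forall>a\<in>Q0 X. \<forall>b\<in>Q0 X. Dt (a * b) = peval P a (Dt a) b (Dt b)"
  proof (intro ballI)
    fix a b assume a: "a \<in> Q0 X" and b: "b \<in> Q0 X"
    let ?E = "\<lambda>m. sg m (1::rat)"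
    let ?d = "Dm P D"
    have "L (a * b) = (\<Sum>m\<in>ks a. \<Sum>n\<in>ks b. sg 0 (lk a m * lk b n) * ?d (m + n))"
      unfolding L_def by (rule lin_prod)
    also have "\<dots> = (\<Sum>m\<in>ks a. \<Sum>n\<in>ks b. sg 0 (lk a m) * (sg 0 (lk b n) * peval P (?E m) (?d m) (?E n) (?d n)))"
    proof (intro sum.cong refl)
      fix m n assume "m \<in> ks a" "n \<in> ks b"
      then have "m \<noteq> 0" "ks m \<subseteq> X" "n \<noteq> 0" "ks n \<subseteq> X" using Q0_keys[OF a] Q0_keys[OF b] by auto
      then show "sg 0 (lk a m * lk b n) * ?d (m + n) = sg 0 (lk a m) * (sg 0 (lk b n) * peval P (?E m) (?d m) (?E n) (?d n))"
        by (simp add: Dm_add[OF sp D] C_mult mult.assoc)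
    qed
    also have "\<dots> = (\<Sum>m\<in>ks a. sg 0 (lk a m) * peval P (?E m) (?d m) b (L b))"
    proof (intro sum.cong refl)
      fix m
      have "peval P (?E m) (?d m) b (L b) = peval P (?E m) (?d m) (\<Sum>n\<in>ks b. sg 0 (lk b n) * ?E n) (\<Sum>n\<in>ks b. sg 0 (lk b n) * ?d n)"
        by (simp only: L_def lin_def expand1[symmetric])
      also have "\<dots> = (\<Sum>n\<in>ks b. sg 0 (lk b n) * peval P (?E m) (?d m) (?E n) (?d n))"
        by (rule sp_sum2[OF sp]) simp
      finally show "(\<Sum>n\<in>ks b. sg 0 (lk a m) * (sg 0 (lk b n) * peval P (?E m) (?d m) (?E n) (?d n))) = sg 0 (lk a m) * peval P (?E m) (?d m) b (L b)"
        by (simp add: sum_distrib_left)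
    qed
    also have "\<dots> = peval P (\<Sum>m\<in>ks a. sg 0 (lk a m) * ?E m) (\<Sum>m\<in>ks a. sg 0 (lk a m) * ?d m) b (L b)"
      by (rule sp_sum1[OF sp, symmetric]) simp
    also have "\<dots> = peval P a (L a) b (L b)"
      by (simp only: L_def lin_def expand1[symmetric])
    finally have "L (a * b) = peval P a (L a) b (L b)" .
    then show "Dt (a * b) = peval P a (Dt a) b (Dt b)"
      using a b Q0_mult[OF a b] by (simp add: Dt_def)
  qed
  show ?thesis
  proof (rule ex1I[of _ Dt])
    show "Dt \<in> Q0 X \<rightarrow>\<^sub>E Q0 X
          \<and> (\<forall>a\<in>Q0 X. \<forall>b\<in>Q0 X. Dt (a + b) = Dt a + Dt b)
          \<and> (\<forall>c. \<forall>a\<in>Q0 X. Dt (psmult c a) = psmult c (Dt a))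
          \<and> (\<forall>x\<in>X. Dt (pvar x) = D x)
          \<and> (\<forall>a\<in>Q0 X. \<forall>b\<in>Q0 X. Dt (a * b) = peval P a (Dt a) b (Dt b))"
      using P1 P2 P3 P4 P5 by blast
  next
    fix Dt'
    assume H: "Dt' \<in> Q0 X \<rightarrow>\<^sub>E Q0 X
          \<and> (\<forall>a\<in>Q0 X. \<forall>b\<in>Q0 X. Dt' (a + b) = Dt' a + Dt' b)
          \<and> (\<forall>c. \<forall>a\<in>Q0 X. Dt' (psmult c a) = psmult c (Dt' a))
          \<and> (\<forall>x\<in>X. Dt' (pvar x) = D x)
          \<and> (\<forall>a\<in>Q0 X. \<forall>b\<in>Q0 X. Dt' (a * b) = peval P a (Dt' a) b (Dt' b))"
    then have H1: "Dt' \<in> Q0 X \<rightarrow>\<^sub>E Q0 X"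
      and H2: "\<forall>a\<in>Q0 X. \<forall>b\<in>Q0 X. Dt' (a + b) = Dt' a + Dt' b"
      and H3: "\<forall>c. \<forall>a\<in>Q0 X. Dt' (psmult c a) = psmult c (Dt' a)"
      and H4: "\<forall>x\<in>X. Dt' (pvar x) = D x"
      and H5: "\<forall>a\<in>Q0 X. \<forall>b\<in>Q0 X. Dt' (a * b) = peval P a (Dt' a) b (Dt' b)"
      by blast+
    show "Dt' = Dt"
    proof
      fix p
      show "Dt' p = Dt p"
      proof (cases "p \<in> Q0 X")
        case False
        then show ?thesis using H1 by (simp add: Dt_def PiE_def extensional_def)
      next
        case True
        have km: "\<forall>m\<in>ks p. sg m 1 \<in> Q0 X"
          using Q0_keys[OF True] by (auto intro: Q0_single)
        have "Dt' p = Dt' (\<Sum>m\<in>ks p. sg 0 (lk p m) * sg m 1)"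
          by (simp only: expand1[symmetric])
        also have "\<dots> = (\<Sum>m\<in>ks p. sg 0 (lk p m) * Dt' (sg m 1))"
          by (rule map_sum[OF H2 H3 _ km]) simp
        also have "\<dots> = (\<Sum>m\<in>ks p. sg 0 (lk p m) * Dm P D m)"
        proof (intro sum.cong refl)
          fix m assume "m \<in> ks p"
          then have "m \<noteq> 0" "ks m \<subseteq> X" using Q0_keys[OF True] by auto
          then show "sg 0 (lk p m) * Dt' (sg m 1) = sg 0 (lk p m) * Dm P D m"
            using Dm_uniq[OF sp H4 H5] by simp
        qed
        also have "\<dots> = Dt p" using True by (simp add: Dt_def L_def lin_def)
        finally show ?thesis .
      qed
    qed
  qed
qed


end
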